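(* Let $a,b$ be positive integers and $c,d$ nonnegative integers. For $n\ge0$ let $$P_n(x)=\sum_{k=0}^{n}\frac{(q^{-n},q^{n+a+b+c+d-1};q)_k\,(q^a(1+(q-1)x);q)_k\,q^k}{(q,q^{a+c},q^{a+d};q)_k},$$ i.e. ${}_3\phi_2\!\left(q^{-n},q^{n+a+b+c+d-1},q^a(1+(q-1)x);q^{a+c},q^{a+d};q,q\right)$. Let $W(x)=\operatorname{Asc}(x,a-1)\operatorname{Asc}(x,b-1)\operatorname{Desc}(x,c-1)\operatorname{Desc}(x,d-1)$ and $C_{a,b,c,d}=\Psi(x^2W(x))$. Then the numbers $\Psi(x^{n+2}W(x))/C_{a,b,c,d}$, $n\ge0$, are the moments of the orthogonal polynomials $(P_n)_{n\ge0}$.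
   Context: $q$ is an indeterminate; work over $\mathbb{Q}(q)$. The $q$-Bernoulli–Carlitz numbers $\beta_n$ are defined by: for all $n\ge0$, $q\sum_{k=0}^{n}\binom{n}{k}q^k\beta_k-\beta_n$ equals $q-1$ if $n=0$, $1$ if $n=1$, $0$ if $n>1$. $\Psi$ is the linear form on $\mathbb{Q}(q)[x]$ with $\Psi(x^n)=\beta_n$. $[m]_q=(q^m-1)/(q-1)$. $\operatorname{Asc}(x,0)=1$ and $\operatorname{Asc}(x,a)=\prod_{i=1}^a([i]_q+q^ix)$ for $a\ge1$; $\operatorname{Desc}(x,-1)=-1/x$, $\operatorname{Desc}(x,0)=1$, $\operatorname{Desc}(x,a)=\prod_{i=1}^a([i]_q-x)$ for $a\ge1$ (so $x^2W(x)$ is a polynomial). $(a;q)_k=(1-a)(1-qa)\cdots(1-q^{k-1}a)$, $(a_1,\dots,a_r;q)_k=\prod_i(a_i;q)_k$. A sequence $(m_n)$ with $m_0=1$ is the sequence of moments of $(P_n)$ ($\deg P_n=n$) if the linear functional $L$ with $L(x^n)=m_n$ satisfies $L(P_mP_n)=0$ for $m\ne n$ and $L(P_n^2)\ne0$. *)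

theory Defs
  imports "HOL-Computational_Algebra.Polynomial" "HOL-Computational_Algebra.Fraction_Field"
begin

type_synonym Qq = "rat poly fract"

definition qq :: Qq where "qq = Fract [:0, 1:] 1"

definition qint :: "nat \<Rightarrow> Qq" where "qint m = (qq ^ m - 1) / (qq - 1)"

text \<open>Right-hand side of the defining relation of the Bernoulli-Carlitz numbers.\<close>
definition beta_rhs :: "nat \<Rightarrow> Qq" where
  "beta_rhs n = (if n = 0 then qq - 1 else if n = 1 then 1 else 0)"

text \<open>beta n solved from  q * sum_{k<=n} binom(n,k) q^k beta_k - beta_n = rhs(n):
  (q^(n+1) - 1) beta_n = rhs(n) - q * sum_{k<n} binom(n,k) q^k beta_k.\<close>
function beta :: "nat \<Rightarrow> Qq" where
  "beta n = (beta_rhs n - qq * (\<Sum>k\<in>{k. k < n}. of_nat (n choose k) * qq ^ k * beta k))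
             / (qq ^ (n + 1) - 1)"
  by auto
termination by (relation "measure id") auto

definition Psi :: "Qq poly \<Rightarrow> Qq" where
  "Psi p = (\<Sum>i\<le>degree p. coeff p i * beta i)"

definition Asc :: "nat \<Rightarrow> Qq poly" where
  "Asc a = (\<Prod>i=1..a. [:qint i, qq ^ i:])"

definition Desc :: "nat \<Rightarrow> Qq poly" where
  "Desc a = (\<Prod>i=1..a. [:qint i, -1:])"

text \<open>xDesc c = x * Desc(x, c-1), a polynomial also for c = 0 (Desc(x,-1) = -1/x).\<close>
definition xDesc :: "nat \<Rightarrow> Qq poly" where
  "xDesc c = (if c = 0 then [:-1:] else [:0, 1:] * Desc (c - 1))"

definition x2W :: "nat \<Rightarrow> nat \<Rightarrow> nat \<Rightarrow> nat \<Rightarrow> Qq poly" where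
  "x2W a b c d = Asc (a - 1) * Asc (b - 1) * xDesc c * xDesc d"

definition qpoch :: "Qq \<Rightarrow> nat \<Rightarrow> Qq" where
  "qpoch y k = (\<Prod>j<k. 1 - qq ^ j * y)"

definition qpoch_poly :: "Qq poly \<Rightarrow> nat \<Rightarrow> Qq poly" where
  "qpoch_poly y k = (\<Prod>j<k. 1 - smult (qq ^ j) y)"

definition Pn :: "nat \<Rightarrow> nat \<Rightarrow> nat \<Rightarrow> nat \<Rightarrow> nat \<Rightarrow> Qq poly" where
  "Pn a b c d n = (\<Sum>k\<le>n.
     smult (qpoch (inverse qq ^ n) k * qpoch (qq ^ (n + a + b + c + d - 1)) k * qq ^ k
            / (qpoch qq k * qpoch (qq ^ (a + c)) k * qpoch (qq ^ (a + d)) k))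
       (qpoch_poly [:qq ^ a, qq ^ a * (qq - 1):] k))"

definition mom_functional :: "(nat \<Rightarrow> Qq) \<Rightarrow> Qq poly \<Rightarrow> Qq" where
  "mom_functional m p = (\<Sum>i\<le>degree p. coeff p i * m i)"

definition is_moments_of :: "(nat \<Rightarrow> Qq) \<Rightarrow> (nat \<Rightarrow> Qq poly) \<Rightarrow> bool" where
  "is_moments_of m P \<longleftrightarrow> m 0 = 1 \<and> (\<forall>n. degree (P n) = n \<and> P n \<noteq> 0) \<and>
     (\<forall>i j. i \<noteq> j \<longrightarrow> mom_functional m (P i * P j) = 0) \<and>
     (\<forall>n. mom_functional m (P n * P n) \<noteq> 0)"

end

theory Submission
  imports Defs
begin


declare beta.simps[simp del]

lemma qq_pow: "qq ^ n = Fract (monom 1 n) 1"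
proof (induction n)
  case 0 thus ?case by (simp add: One_fract_def monom_0 flip: one_pCons)
next
  case (Suc n) thus ?case by (simp add: qq_def monom_Suc)
qed

lemma qq_pow_inj: "qq ^ m = qq ^ n \<Longrightarrow> m = n"
proof -
  assume "qq ^ m = qq ^ n"
  hence "monom (1::rat) m = monom 1 n" by (simp add: qq_pow eq_fract)
  hence "coeff (monom (1::rat) m) m = coeff (monom 1 n) m" by simp
  thus "m = n" by (simp split: if_splits)
qed

lemma qq_ne0 [simp]: "qq \<noteq> 0"
  by (simp add: qq_def Zero_fract_def eq_fract)

lemma qq_pow_ne1: "n > 0 \<Longrightarrow> qq ^ n \<noteq> 1"
  using qq_pow_inj[of n 0] by auto

lemma qq_ne1 [simp]: "qq \<noteq> 1"
  using qq_pow_ne1[of 1] by simp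

lemma one_minus_qq_pow_ne0: "n > 0 \<Longrightarrow> 1 - qq ^ n \<noteq> 0"
  using qq_pow_ne1 by auto

lemma qq_pow_minus_one_ne0: "n > 0 \<Longrightarrow> qq ^ n - 1 \<noteq> 0"
  using qq_pow_ne1 by auto

lemma qq_pow_eq_iff [simp]: "qq ^ m = qq ^ n \<longleftrightarrow> m = n"
  using qq_pow_inj by auto

lemma qq_pow_eq_1_iff [simp]: "qq ^ m = 1 \<longleftrightarrow> m = 0"
  using qq_pow_inj[of m 0] by auto

lemma Psi_bound: "degree p \<le> N \<Longrightarrow> Psi p = (\<Sum>i\<le>N. coeff p i * beta i)"
  unfolding Psi_def
  by (rule sum.mono_neutral_left) (auto simp: coeff_eq_0)

lemma Psi_add: "Psi (p + r) = Psi p + Psi r"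
proof -
  define N where "N = max (degree p) (degree r)"
  have "degree (p + r) \<le> N" by (simp add: N_def degree_add_le)
  thus ?thesis using Psi_bound[of p N] Psi_bound[of r N] Psi_bound[of "p + r" N]
    by (simp add: N_def sum.distrib distrib_right)
qed

lemma Psi_smult: "Psi (smult c p) = c * Psi p"
  using Psi_bound[of "smult c p" "degree p"] Psi_bound[of p "degree p"]
  by (simp add: sum_distrib_left mult_ac)

lemma Psi_0 [simp]: "Psi 0 = 0"
  by (simp add: Psi_def)

lemma Psi_uminus: "Psi (- p) = - Psi p"
  using Psi_smult[of "-1" p] by simp

lemma Psi_diff: "Psi (p - r) = Psi p - Psi r"
  using Psi_add[of p "-r"] Psi_uminus[of r] by simp

lemma Psi_sum: "Psi (\<Sum>i\<in>A. f i) = (\<Sum>i\<in>A. Psi (f i))"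
  by (induction A rule: infinite_finite_induct) (auto simp: Psi_add)

lemma Psi_monom: "Psi (monom c n) = c * beta n"
proof -
  have "Psi (monom c n) = (\<Sum>i\<le>n. if i = n then c * beta i else 0)"
  proof -
    have "(\<Sum>i\<le>n. coeff (monom c n) i * beta i) = (\<Sum>i\<le>n. if i = n then c * beta i else 0)"
      by (rule sum.cong) (auto simp: coeff_monom)
    thus ?thesis using Psi_bound[of "monom c n" n] by (simp add: degree_monom_le)
  qed
  thus ?thesis by simp
qed

section \<open>The defining relation\<close>

lemma beta_rel: "qq * (\<Sum>k\<le>n. of_nat (n choose k) * qq ^ k * beta k) - beta n = beta_rhs n"
proof -
  have ne: "qq ^ (n + 1) - 1 \<noteq> 0" using qq_pow_minus_one_ne0[of "n+1"] by simp
  have "{k. k < n} = {..<n}" by auto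
  hence b: "beta n = (beta_rhs n - qq * (\<Sum>k<n. of_nat (n choose k) * qq ^ k * beta k)) / (qq ^ (n + 1) - 1)"
    by (subst beta.simps) simp
  have "(\<Sum>k\<le>n. of_nat (n choose k) * qq ^ k * beta k) = (\<Sum>k<n. of_nat (n choose k) * qq ^ k * beta k) + qq ^ n * beta n"
    by (simp add: lessThan_Suc_atMost[symmetric])
  moreover have "beta n * (qq ^ (n + 1) - 1) = beta_rhs n - qq * (\<Sum>k<n. of_nat (n choose k) * qq ^ k * beta k)"
    using b ne by (simp add: field_simps)
  ultimately show ?thesis by (simp add: algebra_simps)
qed

lemma pcompose_monom: "pcompose (monom c n) r = smult c (r ^ n)"
  by (induction n) (simp_all add: monom_0 monom_Suc pcompose_pCons mult_ac)

lemma pcompose_expand: "pcompose p r = (\<Sum>i\<le>degree p. smult (coeff p i) (r ^ i))"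
proof -
  have "pcompose p r = pcompose (\<Sum>i\<le>degree p. monom (coeff p i) i) r"
    by (simp add: poly_as_sum_of_monoms)
  also have "\<dots> = (\<Sum>i\<le>degree p. smult (coeff p i) (r ^ i))"
    by (simp add: pcompose_sum pcompose_monom)
  finally show ?thesis .
qed

lemma Psi_shift_monom:
  "qq * Psi ([:1, qq:] ^ n) - Psi (monom 1 n) = beta_rhs n"
proof -
  have "Psi ([:1, qq:] ^ n) = (\<Sum>k\<le>n. of_nat (n choose k) * qq ^ k * beta k)"
  proof -
    have "degree ([:1,qq:]^n) \<le> n" using degree_power_le[of "[:1,qq:]" n] by simp
    thus ?thesis using Psi_bound[of "[:1, qq:] ^ n" n]
      by (simp add: coeff_linear_poly_power)
  qed
  thus ?thesis using beta_rel[of n] by (simp add: Psi_monom)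
qed

lemma Psi_shift:
  "qq * Psi (pcompose p [:1, qq:]) - Psi p = (qq - 1) * coeff p 0 + coeff p 1"
proof -
  define N where "N = degree p"
  have "qq * Psi (pcompose p [:1, qq:]) - Psi p
      = (\<Sum>i\<le>N. coeff p i * (qq * Psi ([:1, qq:] ^ i) - Psi (monom 1 i)))"
  proof -
    have "Psi p = (\<Sum>i\<le>N. coeff p i * beta i)" by (simp add: Psi_def N_def)
    moreover have "Psi (pcompose p [:1, qq:]) = (\<Sum>i\<le>N. coeff p i * Psi ([:1, qq:] ^ i))"
      by (simp add: pcompose_expand N_def Psi_sum Psi_smult)
    ultimately show ?thesis
      by (simp add: Psi_monom sum_distrib_left sum_subtractf algebra_simps)
  qed
  also have "\<dots> = (\<Sum>i\<le>N. coeff p i * beta_rhs i)"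
    by (simp add: Psi_shift_monom)
  also have "\<dots> = (qq - 1) * coeff p 0 + coeff p 1"
  proof (cases "N = 0")
    case True
    hence "coeff p 1 = 0" by (simp add: N_def coeff_eq_0)
    thus ?thesis using True by (simp add: beta_rhs_def)
  next
    case False
    have "(\<Sum>i\<le>N. coeff p i * beta_rhs i) = (\<Sum>i\<in>{0,1}. coeff p i * beta_rhs i)"
      by (rule sum.mono_neutral_right) (use False in \<open>auto simp: beta_rhs_def\<close>)
    thus ?thesis by (simp add: beta_rhs_def)
  qed
  finally show ?thesis .
qed



lemma MF_bound: "degree p \<le> N \<Longrightarrow> mom_functional m p = (\<Sum>i\<le>N. coeff p i * m i)"
  unfolding mom_functional_def
  by (rule sum.mono_neutral_left) (auto simp: coeff_eq_0)

lemma MF_add: "mom_functional m (p + r) = mom_functional m p + mom_functional m r"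
proof -
  define N where "N = max (degree p) (degree r)"
  have "degree (p + r) \<le> N" by (simp add: N_def degree_add_le)
  thus ?thesis using MF_bound[of p N m] MF_bound[of r N m] MF_bound[of "p + r" N m]
    by (simp add: N_def sum.distrib distrib_right)
qed

lemma MF_smult: "mom_functional m (smult c p) = c * mom_functional m p"
  using MF_bound[of "smult c p" "degree p" m] MF_bound[of p "degree p" m]
  by (simp add: sum_distrib_left mult_ac)

lemma MF_0 [simp]: "mom_functional m 0 = 0"
  by (simp add: mom_functional_def)

lemma MF_uminus: "mom_functional m (- p) = - mom_functional m p"
  using MF_smult[of m "-1" p] by simp

lemma MF_diff: "mom_functional m (p - r) = mom_functional m p - mom_functional m r"
  using MF_add[of m p "-r"] MF_uminus[of m r] by simp

lemma MF_sum: "mom_functional m (\<Sum>i\<in>A. f i) = (\<Sum>i\<in>A. mom_functional m (f i))"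
  by (induction A rule: infinite_finite_induct) (auto simp: MF_add)

lemma MF_monom: "mom_functional m (monom c n) = c * m n"
proof -
  have "(\<Sum>i\<le>n. coeff (monom c n) i * m i) = (\<Sum>i\<le>n. if i = n then c * m i else 0)"
    by (rule sum.cong) (auto simp: coeff_monom)
  thus ?thesis using MF_bound[of "monom c n" n m] by (simp add: degree_monom_le)
qed

lemma MF_eqI:
  assumes "\<And>n. mom_functional m (monom 1 n) = mom_functional m' (monom 1 n)"
  shows "mom_functional m p = mom_functional m' p"
proof -
  have "\<And>n. m n = m' n" using assms by (simp add: MF_monom)
  thus ?thesis by (simp add: mom_functional_def)
qed

lemma Psi_MF: "Psi = mom_functional beta"
  by (simp add: fun_eq_iff Psi_def mom_functional_def)

section \<open>The variable y = 1 + (q-1) x\<close>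

definition Y :: "Qq poly" where "Y = [:1, qq - 1:]"

definition mu :: "nat \<Rightarrow> Qq" where "mu n = of_nat (n + 1) * (qq - 1) / (qq ^ (n + 1) - 1)"

abbreviation Psiy :: "Qq poly \<Rightarrow> Qq" where "Psiy \<equiv> mom_functional mu"

lemma pcompose_power: "pcompose (p ^ n) r = (pcompose p r) ^ n"
  by (induction n) (simp_all add: pcompose_1 pcompose_mult)

lemma Psi_Y_pow: "Psi (Y ^ n) = mu n"
proof -
  have c: "pcompose Y [:1, qq:] = smult qq Y"
    by (simp add: Y_def pcompose_pCons algebra_simps)
  have c0: "coeff (Y ^ n) 0 = 1" by (simp add: Y_def coeff_linear_poly_power)
  have c1: "coeff (Y ^ n) (Suc 0) = of_nat n * (qq - 1)"
  proof (cases n)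
    case 0 thus ?thesis by simp
  next
    case (Suc k) thus ?thesis
      using coeff_linear_poly_power[where i=1 and n=n and a=1 and b="qq-1"] by (simp add: Y_def)
  qed
  have "qq * Psi (smult (qq ^ n) (Y ^ n)) - Psi (Y ^ n) = (qq - 1) + of_nat n * (qq - 1)"
    using Psi_shift[of "Y ^ n"] by (simp add: pcompose_power c c0 c1 smult_power)
  hence "(qq ^ (n + 1) - 1) * Psi (Y ^ n) = of_nat (n + 1) * (qq - 1)"
    by (simp add: Psi_smult algebra_simps)
  moreover have "qq ^ (n + 1) - 1 \<noteq> 0" using qq_pow_minus_one_ne0[of "n+1"] by simp
  ultimately show ?thesis by (simp add: mu_def field_simps)
qed

lemma Psi_pcompose_Y: "Psi (pcompose p Y) = Psiy p"
proof -
  have "Psi (pcompose p Y) = (\<Sum>i\<le>degree p. coeff p i * mu i)"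
    by (simp add: pcompose_expand Psi_sum Psi_smult Psi_Y_pow)
  thus ?thesis by (simp add: mom_functional_def)
qed

lemma smult_sum_r: "smult c (\<Sum>i\<in>A. f i) = (\<Sum>i\<in>A. smult c (f i))"
  by (induction A rule: infinite_finite_induct) (auto simp: smult_add_right)

lemma pderiv_sum: "pderiv (\<Sum>i\<in>A. f i) = (\<Sum>i\<in>A. pderiv (f i))"
  by (induction A rule: infinite_finite_induct) (auto simp: pderiv_add)

lemma Psiy_shift_monom:
  "Psiy (smult qq (pcompose (monom c n) [:0, qq:]) - monom c n)
    = (qq - 1) * (poly (monom c n) 1 + poly (pderiv (monom c n)) 1)"
proof -
  have "[:0, qq:] ^ n = monom (qq ^ n) n"
    using monom_power[of qq 1 n] by (simp add: monom_Suc monom_0)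
  hence "smult qq (pcompose (monom c n) [:0, qq:]) - monom c n = monom ((qq ^ (n+1) - 1) * c) n"
    by (simp add: pcompose_monom smult_monom algebra_simps diff_monom)
  moreover have "qq ^ (n + 1) - 1 \<noteq> 0" using qq_pow_minus_one_ne0[of "n+1"] by simp
  ultimately show ?thesis
    by (cases n) (simp_all add: MF_monom mu_def pderiv_monom poly_monom field_simps)
qed

lemma Psiy_shift:
  "Psiy (smult qq (pcompose h [:0, qq:]) - h) = (qq - 1) * (poly h 1 + poly (pderiv h) 1)"
proof -
  define N where "N = degree h"
  have h: "h = (\<Sum>i\<le>N. monom (coeff h i) i)" by (simp add: N_def poly_as_sum_of_monoms)
  have "smult qq (pcompose h [:0, qq:]) - h
     = (\<Sum>i\<le>N. smult qq (pcompose (monom (coeff h i) i) [:0, qq:]) - monom (coeff h i) i)"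
    by (subst (1 2) h) (simp add: pcompose_sum smult_sum_r sum_subtractf)
  hence "Psiy (smult qq (pcompose h [:0, qq:]) - h)
     = (\<Sum>i\<le>N. (qq - 1) * (poly (monom (coeff h i) i) 1 + poly (pderiv (monom (coeff h i) i)) 1))"
    by (simp add: MF_sum Psiy_shift_monom)
  also have "\<dots> = (qq - 1) * (poly h 1 + poly (pderiv h) 1)"
    by (subst (3 4) h) (simp add: sum_distrib_left poly_sum pderiv_sum sum.distrib distrib_left)
  finally show ?thesis .
qed



definition Aprod :: "nat \<Rightarrow> Qq poly" where "Aprod k = (\<Prod>i<k. [:1, - (qq ^ (i + 1)):])"
definition Dprod :: "nat \<Rightarrow> Qq poly" where "Dprod c = (\<Prod>i<c. [:qq ^ i, -1:])"
definition wy :: "nat \<Rightarrow> nat \<Rightarrow> nat \<Rightarrow> nat \<Rightarrow> Qq poly" where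
  "wy a b c d = Aprod a * Aprod b * Dprod c * Dprod d"
definition Gy :: "nat \<Rightarrow> nat \<Rightarrow> nat \<Rightarrow> nat \<Rightarrow> Qq" where "Gy a b c d = Psiy (wy a b c d)"
definition Pi :: "nat \<Rightarrow> Qq" where "Pi n = (\<Prod>j<n. 1 - qq ^ (j + 1))"
definition Gf :: "nat \<Rightarrow> nat \<Rightarrow> nat \<Rightarrow> nat \<Rightarrow> Qq" where
  "Gf a b c d = (-1) ^ (c + d) * (1 - qq) * qq ^ (c * d) * Pi (a + c) * Pi (a + d) * Pi (b + c) * Pi (b + d)
      / Pi (a + b + c + d + 1)"

lemma Aprod_0 [simp]: "Aprod 0 = 1" by (simp add: Aprod_def)
lemma Dprod_0 [simp]: "Dprod 0 = 1" by (simp add: Dprod_def)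
lemma Pi_0 [simp]: "Pi 0 = 1" by (simp add: Pi_def)
lemma Aprod_Suc: "Aprod (Suc k) = Aprod k * [:1, - (qq ^ (k + 1)):]" by (simp add: Aprod_def)
lemma Dprod_Suc: "Dprod (Suc k) = Dprod k * [:qq ^ k, -1:]" by (simp add: Dprod_def)
lemma Pi_Suc: "Pi (Suc k) = Pi k * (1 - qq ^ (k + 1))" by (simp add: Pi_def)

lemma qq_Suc_pow_ne1 [simp]: "qq * qq ^ n \<noteq> 1"
  using qq_pow_ne1[of "Suc n"] by simp

lemma Pi_ne0: "Pi n \<noteq> 0"
  by (induction n) (simp_all add: Pi_Suc one_minus_qq_pow_ne0)

lemma pcompose_lin: "pcompose [:u, v:] [:0, qq:] = [:u, v * qq:]"
  by (simp add: pcompose_pCons)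

lemma Aprod_shift: "[:1, - qq:] * pcompose (Aprod k) [:0, qq:] = Aprod (Suc k)"
proof (induction k)
  case 0 thus ?case by (simp add: Aprod_def pcompose_1)
next
  case (Suc k)
  have e: "pcompose [:1, - (qq ^ (k + 1)):] [:0, qq:] = [:1, - (qq ^ (Suc k + 1)):]"
    by (simp add: pcompose_lin)
  have "[:1, - qq:] * pcompose (Aprod (Suc k)) [:0, qq:]
       = ([:1, - qq:] * pcompose (Aprod k) [:0, qq:]) * [:1, - (qq ^ (Suc k + 1)):]"
    by (simp only: Aprod_Suc pcompose_mult e mult.assoc)
  also have "\<dots> = Aprod (Suc (Suc k))" by (simp only: Suc Aprod_Suc[of "Suc k"])
  finally show ?case .
qed

lemma poly_Aprod_1: "poly (Aprod k) 1 = Pi k"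
  by (simp add: Aprod_def Pi_def poly_prod)

lemma Gy_sym: "Gy a b c d = Gy b a d c"
  by (simp add: Gy_def wy_def mult_ac)

lemma Gf_sym: "Gf a b c d = Gf b a d c"
  by (simp add: Gf_def mult_ac add_ac)

lemma mu_0: "mu 0 = 1"
  by (simp add: mu_def)

lemma Psiy_1: "Psiy 1 = 1"
  using MF_monom[of mu 1 0] by (simp add: mu_0 monom_0 flip: one_pCons)

text \<open>Stage (i): b = c = d = 0.\<close>

lemma one_minus_y: "[:1, -1:] = smult (inverse (qq ^ (k + 1))) ([:1, - (qq ^ (k + 1)):] - [:1 - qq ^ (k + 1):])"
  by (simp add: field_simps)

lemma stage1_rel:
  "qq * Psiy (Aprod (Suc k)) - inverse (qq ^ (k + 1)) * (Psiy (Aprod (Suc k)) - (1 - qq ^ (k + 1)) * Psiy (Aprod k))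
    = - (qq - 1) * Pi k"
proof -
  define h where "h = [:1, -1:] * Aprod k"
  have h2: "h = smult (inverse (qq ^ (k + 1))) (Aprod (Suc k) - smult (1 - qq ^ (k + 1)) (Aprod k))"
    unfolding h_def Aprod_Suc by (rule poly_ext) (simp add: field_simps)
  have hq: "pcompose h [:0, qq:] = Aprod (Suc k)"
    by (simp only: h_def pcompose_mult pcompose_lin mult_minus_left mult_1_left Aprod_shift)
  have ph: "poly h 1 = 0" by (simp add: h_def)
  have dh: "poly (pderiv h) 1 = - Pi k"
    by (simp only: h_def pderiv_mult) (simp add: pderiv_pCons poly_Aprod_1)
  have E: "Psiy (smult qq (Aprod (Suc k)) - h) = - (qq - 1) * Pi k"
    using Psiy_shift[of h] by (simp only: hq ph dh) (simp add: algebra_simps)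
  show ?thesis using E unfolding h2 by (simp add: MF_diff MF_smult)
qed


lemma stage1: "Psiy (Aprod k) = (1 - qq) * Pi k / (1 - qq ^ (k + 1))"
proof (induction k)
  case 0 thus ?case by (simp add: Psiy_1)
next
  case (Suc k)
  define X where "X = Psiy (Aprod (Suc k))"
  define g where "g = Psiy (Aprod k)"
  define P where "P = qq ^ (k + 1)"
  have P0: "P \<noteq> 0" by (simp add: P_def)
  have n1: "1 - P \<noteq> 0" unfolding P_def by (rule one_minus_qq_pow_ne0) simp
  have n2: "1 - qq * P \<noteq> 0" using one_minus_qq_pow_ne0[of "k+2"] by (simp add: P_def)
  have E: "qq * X - inverse P * (X - (1 - P) * g) = - (qq - 1) * Pi k"
    using stage1_rel[of k] by (simp only: X_def g_def P_def)
  have g: "g = (1 - qq) * Pi k / (1 - P)" using Suc by (simp only: g_def P_def)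
  have "X = (1 - qq) * (Pi k * (1 - P)) / (1 - qq * P)"
  proof -
    have "P * (qq * X - inverse P * (X - (1 - P) * g)) = P * (- (qq - 1) * Pi k)" using E by simp
    hence "qq * P * X - (X - (1 - P) * g) = - (qq - 1) * P * Pi k"
      using P0 by (simp add: right_diff_distrib mult.assoc[symmetric]) (simp add: algebra_simps)
    moreover have "(1 - P) * g = (1 - qq) * Pi k" using n1 by (simp add: g)
    ultimately have "X * (qq * P - 1) = (1 - qq) * Pi k * (P - 1)"
      by (simp add: algebra_simps)
    thus ?thesis using n2 by (simp add: field_simps)
  qed
  thus ?case by (simp add: X_def Pi_Suc P_def)
qed



definition G00 :: "nat \<Rightarrow> nat \<Rightarrow> Qq" where "G00 a b = Psiy (Aprod a * Aprod b)"

lemma R2_rel: "qq * G00 (Suc a) (Suc b) = Psiy (Aprod a * Aprod b * [:1, -1:] * [:1, -1:])"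
proof -
  define h where "h = Aprod a * Aprod b * [:1, -1:] * [:1, -1:]"
  have hq: "pcompose h [:0, qq:] = Aprod (Suc a) * Aprod (Suc b)"
  proof -
    have "pcompose h [:0, qq:] = ([:1, -qq:] * pcompose (Aprod a) [:0, qq:]) * ([:1, -qq:] * pcompose (Aprod b) [:0, qq:])"
      by (simp only: h_def pcompose_mult pcompose_lin mult_minus_left mult_1_left mult_minus_right mult_1_right mult_ac)
    thus ?thesis by (simp only: Aprod_shift)
  qed
  have ph: "poly h 1 = 0" by (simp add: h_def)
  have dh: "poly (pderiv h) 1 = 0"
    by (simp only: h_def pderiv_mult) (simp add: pderiv_pCons)
  have "Psiy (smult qq (Aprod (Suc a) * Aprod (Suc b)) - h) = 0"
    using Psiy_shift[of h] by (simp only: hq ph dh) simp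
  thus ?thesis by (simp add: MF_diff MF_smult G00_def h_def)
qed

lemma R2_expand:
  "Aprod a * Aprod b * [:1, -1:] * [:1, -1:] =
    smult (inverse (qq ^ (a + 1) * qq ^ (b + 1)))
     (Aprod (Suc a) * Aprod (Suc b) - smult (1 - qq ^ (b + 1)) (Aprod (Suc a) * Aprod b)
      - smult (1 - qq ^ (a + 1)) (Aprod a * Aprod (Suc b))
      + smult ((1 - qq ^ (a + 1)) * (1 - qq ^ (b + 1))) (Aprod a * Aprod b))"
  unfolding Aprod_Suc by (rule poly_ext) (simp add: field_simps)

lemma G00_rec:
  "(qq * qq ^ (a + 1) * qq ^ (b + 1) - 1) * G00 (Suc a) (Suc b)
    = - (1 - qq ^ (b + 1)) * G00 (Suc a) b - (1 - qq ^ (a + 1)) * G00 a (Suc b)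
      + (1 - qq ^ (a + 1)) * (1 - qq ^ (b + 1)) * G00 a b"
proof -
  define A where "A = qq ^ (a + 1)"
  define B where "B = qq ^ (b + 1)"
  have A0: "A \<noteq> 0" and B0: "B \<noteq> 0" by (simp_all add: A_def B_def)
  have "qq * G00 (Suc a) (Suc b) = inverse (A * B) *
     (G00 (Suc a) (Suc b) - (1 - B) * G00 (Suc a) b - (1 - A) * G00 a (Suc b) + (1 - A) * (1 - B) * G00 a b)"
    unfolding R2_rel R2_expand by (simp add: MF_diff MF_add MF_smult G00_def A_def B_def)
  hence "A * B * (qq * G00 (Suc a) (Suc b)) =
     (G00 (Suc a) (Suc b) - (1 - B) * G00 (Suc a) b - (1 - A) * G00 a (Suc b) + (1 - A) * (1 - B) * G00 a b)"
    using A0 B0 by (simp add: field_simps)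
  hence "(qq * A * B - 1) * G00 (Suc a) (Suc b)
    = - (1 - B) * G00 (Suc a) b - (1 - A) * G00 a (Suc b) + (1 - A) * (1 - B) * G00 a b"
    by (simp add: algebra_simps)
  thus ?thesis by (simp only: A_def B_def)
qed


definition F00 :: "nat \<Rightarrow> nat \<Rightarrow> Qq" where
  "F00 a b = (1 - qq) * Pi a ^ 2 * Pi b ^ 2 / Pi (a + b + 1)"

lemma G00_sym: "G00 a b = G00 b a" by (simp add: G00_def mult.commute)

lemma G00_base: "G00 a 0 = F00 a 0"
proof -
  have "1 - qq ^ (a + 1) \<noteq> 0" by (rule one_minus_qq_pow_ne0) simp
  thus ?thesis using Pi_ne0[of a]
    by (simp add: G00_def F00_def stage1 Pi_Suc power2_eq_square field_simps)
qed

lemma F00_alg: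
  fixes c pa pb S A B q :: Qq
  assumes "S \<noteq> 0" "D1 \<noteq> 0" "D2 \<noteq> 0" "D1 = 1 - A * B" "D2 = 1 - q * (A * B)"
  shows "(q * A * B - 1) * (c * (pa * (1 - A)) ^ 2 * (pb * (1 - B)) ^ 2 / (S * D1 * D2))
    = - (1 - B) * (c * (pa * (1 - A)) ^ 2 * pb ^ 2 / (S * D1))
      - (1 - A) * (c * pa ^ 2 * (pb * (1 - B)) ^ 2 / (S * D1))
      + (1 - A) * (1 - B) * (c * pa ^ 2 * pb ^ 2 / S)"
proof -
  have e: "(q * A * B - 1) = - D2" using assms by simp
  have L: "(q * A * B - 1) * (c * (pa * (1 - A)) ^ 2 * (pb * (1 - B)) ^ 2 / (S * D1 * D2))
     = - (c * pa ^ 2 * pb ^ 2 * (1 - A) ^ 2 * (1 - B) ^ 2 / (S * D1))"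
    using assms(1-3) unfolding e power_mult_distrib by (simp add: field_simps)
  have "- (1 - B) * (c * (pa * (1 - A)) ^ 2 * pb ^ 2 / (S * D1))
      - (1 - A) * (c * pa ^ 2 * (pb * (1 - B)) ^ 2 / (S * D1))
      + (1 - A) * (1 - B) * (c * pa ^ 2 * pb ^ 2 / S)
     = c * pa ^ 2 * pb ^ 2 * (1 - A) * (1 - B) * (D1 - (1 - A) - (1 - B)) / (S * D1)"
    using assms(1-3) by (simp add: field_simps) (simp add: algebra_simps power2_eq_square)
  moreover have "D1 - (1 - A) - (1 - B) = - ((1 - A) * (1 - B))" using assms(4) by (simp add: algebra_simps)
  moreover have "c * pa ^ 2 * pb ^ 2 * (1 - A) * (1 - B) * (- ((1 - A) * (1 - B)))
      = - (c * pa ^ 2 * pb ^ 2 * (1 - A) ^ 2 * (1 - B) ^ 2)" by (simp add: power2_eq_square mult_ac)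
  ultimately show ?thesis unfolding L by (metis minus_divide_left)
qed

lemma G00_closed: "G00 a b = F00 a b"
proof (induction b arbitrary: a)
  case 0 thus ?case by (rule G00_base)
next
  case (Suc b)
  note outer = Suc.IH
  show ?case
  proof (induction a)
    case 0
    have "G00 0 (Suc b) = G00 (Suc b) 0" by (rule G00_sym)
    also have "\<dots> = F00 (Suc b) 0" by (rule G00_base)
    finally show ?case by (simp add: F00_def mult.commute)
  next
    case (Suc a)
    define A where "A = qq ^ (a + 1)"
    define B where "B = qq ^ (b + 1)"
    have AB: "A * B = qq ^ (a + b + 2)" by (simp add: A_def B_def power_add[symmetric])
    have n1: "1 - A * B \<noteq> 0" unfolding AB by (rule one_minus_qq_pow_ne0) simp
    have AB3: "qq * (A * B) = qq ^ (a + b + 3)" by (simp add: AB eval_nat_numeral)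
    have n2: "1 - qq * (A * B) \<noteq> 0" unfolding AB3 by (rule one_minus_qq_pow_ne0) simp
    have n3: "qq * A * B - 1 \<noteq> 0" using n2 by (simp add: algebra_simps)
    have Pa: "Pi (Suc a) = Pi a * (1 - A)" by (simp add: Pi_Suc A_def)
    have Pb: "Pi (Suc b) = Pi b * (1 - B)" by (simp add: Pi_Suc B_def)
    have S1: "Pi (a + Suc b + 1) = Pi (a + b + 1) * (1 - A * B)"
      by (simp add: Pi_Suc AB)
    have S1': "Pi (Suc a + b + 1) = Pi (a + b + 1) * (1 - A * B)"
      using S1 by simp
    have S2: "Pi (Suc a + Suc b + 1) = Pi (a + b + 1) * (1 - A * B) * (1 - qq * (A * B))"
      using S1 by (simp add: Pi_Suc AB)
    have rec: "(qq * A * B - 1) * G00 (Suc a) (Suc b)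
      = - (1 - B) * G00 (Suc a) b - (1 - A) * G00 a (Suc b) + (1 - A) * (1 - B) * G00 a b"
      using G00_rec[of a b] by (simp only: A_def B_def)
    have "(qq * A * B - 1) * G00 (Suc a) (Suc b) = (qq * A * B - 1) * F00 (Suc a) (Suc b)"
      unfolding rec Suc.IH outer[of a] outer[of "Suc a"]
      unfolding F00_def Pa Pb S1 S1' S2
      by (rule F00_alg[symmetric]) (use Pi_ne0 n1 n2 in auto)
    thus ?case using n3 by simp
  qed
qed



lemma R1_poly: "wy (Suc a) b c d - smult (qq ^ (a + 1)) (wy a b (Suc c) d) = smult (1 - qq ^ (a + 1 + c)) (wy a b c d)"
  unfolding wy_def Aprod_Suc Dprod_Suc by (rule poly_ext) (simp add: algebra_simps power_add)

lemma R1'_poly: "wy a (Suc b) c d - smult (qq ^ (b + 1)) (wy a b c (Suc d)) = smult (1 - qq ^ (b + 1 + d)) (wy a b c d)"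
  unfolding wy_def Aprod_Suc Dprod_Suc by (rule poly_ext) (simp add: algebra_simps power_add)

lemma R1_G: "Gy a b (Suc c) d * qq ^ (a + 1) = Gy (Suc a) b c d - (1 - qq ^ (a + 1 + c)) * Gy a b c d"
proof -
  have "Psiy (wy (Suc a) b c d - smult (qq ^ (a + 1)) (wy a b (Suc c) d)) = Psiy (smult (1 - qq ^ (a + 1 + c)) (wy a b c d))"
    by (simp only: R1_poly)
  thus ?thesis by (simp add: MF_diff MF_smult Gy_def algebra_simps)
qed

lemma R1_alg:
  fixes s e q qd qa X1 X2 X3 X4 S u v w z :: Qq
  assumes "S \<noteq> 0" "1 - z \<noteq> 0" "w = qa * qd" "z = w * v"
  shows "(- s) * (1 - q) * (e * qd) * (X1 * (1 - u)) * X2 * (X3 * (1 - v)) * X4 / (S * (1 - z)) * qa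
    = s * (1 - q) * e * (X1 * (1 - u)) * (X2 * (1 - w)) * X3 * X4 / (S * (1 - z))
      - (1 - u) * (s * (1 - q) * e * X1 * X2 * X3 * X4 / S)"
proof -
  define T where "T = s * (1 - q) * e * X1 * X2 * X3 * X4 * (1 - u) / (S * (1 - z))"
  have l: "(- s) * (1 - q) * (e * qd) * (X1 * (1 - u)) * X2 * (X3 * (1 - v)) * X4 / (S * (1 - z)) * qa
     = - T * w * (1 - v)" using assms(1,2) unfolding T_def assms(3) by (simp add: field_simps)
  have r1: "s * (1 - q) * e * (X1 * (1 - u)) * (X2 * (1 - w)) * X3 * X4 / (S * (1 - z)) = T * (1 - w)"
    using assms(1,2) unfolding T_def by (simp add: field_simps)
  have r2: "(1 - u) * (s * (1 - q) * e * X1 * X2 * X3 * X4 / S) = T * (1 - z)"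
    using assms(1,2) by (simp add: T_def field_simps)
  have "- T * w * (1 - v) = T * (1 - w) - T * (1 - z)" by (simp add: assms(4) algebra_simps)
  thus ?thesis by (simp only: l r1 r2)
qed

lemma Gf_R1: "Gf a b (Suc c) d * qq ^ (a + 1) = Gf (Suc a) b c d - (1 - qq ^ (a + 1 + c)) * Gf a b c d"
proof -
  define M where "M = a + b + c + d"
  have e1: "Gf a b (Suc c) d = (- ((-1) ^ (c + d))) * (1 - qq) * (qq ^ (c * d) * qq ^ d) * (Pi (a + c) * (1 - qq ^ (a + c + 1)))
     * Pi (a + d) * (Pi (b + c) * (1 - qq ^ (b + c + 1))) * Pi (b + d) / (Pi (M + 1) * (1 - qq ^ (M + 2)))"
    by (simp add: Gf_def M_def Pi_Suc power_add algebra_simps)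
  have e2: "Gf (Suc a) b c d = (-1) ^ (c + d) * (1 - qq) * qq ^ (c * d) * (Pi (a + c) * (1 - qq ^ (a + c + 1)))
     * (Pi (a + d) * (1 - qq ^ (a + 1) * qq ^ d)) * Pi (b + c) * Pi (b + d) / (Pi (M + 1) * (1 - qq ^ (M + 2)))"
    by (simp add: Gf_def M_def Pi_Suc power_add algebra_simps)
  have e3: "Gf a b c d = (-1) ^ (c + d) * (1 - qq) * qq ^ (c * d) * Pi (a + c) * Pi (a + d) * Pi (b + c) * Pi (b + d) / Pi (M + 1)"
    by (simp add: Gf_def M_def)
  have z: "qq ^ (M + 2) = (qq ^ (a + 1) * qq ^ d) * qq ^ (b + c + 1)"
    by (simp add: M_def power_add[symmetric] algebra_simps)
  have nz: "1 - qq ^ (M + 2) \<noteq> 0" by (rule one_minus_qq_pow_ne0) simp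
  have "a + 1 + c = a + c + 1" by simp
  thus ?thesis unfolding e1 e2 e3
    by (simp only:) (rule R1_alg[OF Pi_ne0 nz refl z])
qed


lemma Gy_base: "Gy a b 0 0 = Gf a b 0 0"
  by (simp add: Gy_def wy_def G00_closed[unfolded G00_def] F00_def Gf_def power2_eq_square mult_ac)

lemma Gy_c: "Gy a b c 0 = Gf a b c 0"
proof (induction c arbitrary: a b)
  case 0 thus ?case by (rule Gy_base)
next
  case (Suc c)
  have "Gy a b (Suc c) 0 * qq ^ (a + 1) = Gf a b (Suc c) 0 * qq ^ (a + 1)"
    unfolding R1_G Gf_R1 Suc.IH ..
  thus ?case by simp
qed

lemma Gy_closed: "Gy a b c d = Gf a b c d"
proof (induction d arbitrary: a b)
  case 0 thus ?case by (rule Gy_c)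
next
  case (Suc d)
  have "Gy b a (Suc d) c * qq ^ (b + 1) = Gf b a (Suc d) c * qq ^ (b + 1)"
    unfolding R1_G Gf_R1 Gy_sym[of _ _ d c] Gf_sym[of _ _ d c] Suc.IH ..
  thus ?case by (simp add: Gy_sym[of a] Gf_sym[of a])
qed



lemma qpoch_0 [simp]: "qpoch y 0 = 1" by (simp add: qpoch_def)
lemma qpoch_Suc: "qpoch y (Suc k) = qpoch y k * (1 - qq ^ k * y)" by (simp add: qpoch_def)
lemma qpoch_Suc_shift: "qpoch (y / qq) (Suc k) = (1 - y / qq) * qpoch y k"
proof -
  have "qpoch (y / qq) (Suc k) = (1 - qq ^ 0 * (y / qq)) * (\<Prod>j<k. 1 - qq ^ Suc j * (y / qq))"
    unfolding qpoch_def by (rule prod.lessThan_Suc_shift)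
  also have "(\<Prod>j<k. 1 - qq ^ Suc j * (y / qq)) = qpoch y k"
    unfolding qpoch_def by (rule prod.cong) (simp_all add: field_simps)
  finally show ?thesis by simp
qed

lemma qq_pow_mult_ne1 [simp]: "qq ^ k * qq \<noteq> 1"
  using qq_pow_ne1[of "Suc k"] by (simp add: mult.commute)

lemma qpoch_qq_ne0: "qpoch qq k \<noteq> 0"
  by (induction k) (simp_all add: qpoch_Suc)

definition tt :: "Qq \<Rightarrow> Qq \<Rightarrow> nat \<Rightarrow> nat \<Rightarrow> Qq" where
  "tt B C n k = qpoch (inverse qq ^ n) k * qpoch B k * qq ^ k / (qpoch qq k * qpoch C k)"

lemma tt_0 [simp]: "tt B C n 0 = 1" by (simp add: tt_def)

lemma tt_vanish: "tt B C n (Suc n) = 0"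
proof -
  have "qpoch (inverse qq ^ n) (Suc n) = 0"
    by (simp add: qpoch_Suc power_inverse)
  thus ?thesis by (simp add: tt_def)
qed

lemma CV_alg:
  fixes T z q u B C w D t1 t2 :: Qq
  assumes "q \<noteq> 0" "u \<noteq> 0" "D \<noteq> 0" "D = (1 - q * u) * (1 - C * u)" "z * w = 1"
    "t1 = T * (1 - z / q) * (1 - B * u) * q / D" "t2 = T * (1 - z * u) * (1 - B * u) * q / D"
  shows "(1 - C * w) * t1 - (B - C * w) * t2 = (1 - B * (q * u)) * t2 / (q * u) - (1 - B * u) * T / u"
proof -
  have z0: "z \<noteq> 0" using assms(5) by auto
  have w: "w = 1 / z" using assms(5) z0 by (simp add: field_simps mult.commute)
  have "(1 - C * (1/z)) * (T * (1 - z / q) * (1 - B * u) * q / D) - (B - C * (1/z)) * (T * (1 - z * u) * (1 - B * u) * q / D)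
     = (1 - B * (q * u)) * (T * (1 - z * u) * (1 - B * u) * q / D) / (q * u) - (1 - B * u) * T / u"
    using assms(1-3) z0 apply (simp add: field_simps) unfolding assms(4) by algebra
  thus ?thesis unfolding w assms(6,7) .
qed


lemma tt_Suc:
  assumes hC: "\<And>m. 1 - qq ^ m * C \<noteq> 0"
  shows "tt B C n (Suc m) = tt B C n m * (1 - inverse qq ^ n * qq ^ m) * (1 - B * qq ^ m) * qq
      / ((1 - qq * qq ^ m) * (1 - C * qq ^ m))"
proof -
  have "qpoch C m \<noteq> 0" unfolding qpoch_def using hC by (simp add: prod_zero_iff)
  moreover have "1 - qq * qq ^ m \<noteq> 0" using one_minus_qq_pow_ne0[of "Suc m"] by simp
  moreover have "1 - C * qq ^ m \<noteq> 0" using hC[of m] by (simp add: mult.commute)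
  ultimately show ?thesis using qpoch_qq_ne0[of m]
    by (simp add: tt_def qpoch_Suc field_simps)
qed

lemma tt_Suc_n:
  assumes hC: "\<And>m. 1 - qq ^ m * C \<noteq> 0"
  shows "tt B C (Suc n) (Suc m) = tt B C n m * (1 - inverse qq ^ n / qq) * (1 - B * qq ^ m) * qq
      / ((1 - qq * qq ^ m) * (1 - C * qq ^ m))"
proof -
  have "qpoch C m \<noteq> 0" unfolding qpoch_def using hC by (simp add: prod_zero_iff)
  moreover have "1 - qq * qq ^ m \<noteq> 0" using one_minus_qq_pow_ne0[of "Suc m"] by simp
  moreover have "1 - C * qq ^ m \<noteq> 0" using hC[of m] by (simp add: mult.commute)
  moreover have e: "qpoch (inverse qq ^ Suc n) (Suc m) = (1 - inverse qq ^ n / qq) * qpoch (inverse qq ^ n) m"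
  proof -
    have "inverse qq ^ Suc n = inverse qq ^ n / qq" by (simp add: field_simps)
    thus ?thesis by (simp only: qpoch_Suc_shift)
  qed
  ultimately show ?thesis using qpoch_qq_ne0[of m]
    unfolding tt_def e by (simp add: qpoch_Suc field_simps)
qed

definition Gt :: "Qq \<Rightarrow> Qq \<Rightarrow> nat \<Rightarrow> nat \<Rightarrow> Qq" where
  "Gt B C n k = (if k = 0 then 0 else (1 - B * qq ^ (k - 1)) * tt B C n (k - 1) / qq ^ (k - 1))"

lemma CV_term:
  assumes hC: "\<And>m. 1 - qq ^ m * C \<noteq> 0"
  shows "(1 - C * qq ^ n) * tt B C (Suc n) k - (B - C * qq ^ n) * tt B C n k = Gt B C n (Suc k) - Gt B C n k"
proof (cases k)
  case 0 thus ?thesis by (simp add: Gt_def algebra_simps)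
next
  case (Suc m)
  have D0: "(1 - qq * qq ^ m) * (1 - C * qq ^ m) \<noteq> 0"
    using one_minus_qq_pow_ne0[of "Suc m"] hC[of m] by (simp add: mult.commute)
  have "(1 - C * qq ^ n) * tt B C (Suc n) (Suc m) - (B - C * qq ^ n) * tt B C n (Suc m)
      = (1 - B * (qq * qq ^ m)) * tt B C n (Suc m) / (qq * qq ^ m) - (1 - B * qq ^ m) * tt B C n m / qq ^ m"
    by (rule CV_alg[OF qq_ne0 _ D0 refl _ tt_Suc_n[OF hC] tt_Suc[OF hC]])
       (simp_all add: power_inverse)
  thus ?thesis using Suc by (simp add: Gt_def)
qed

lemma qCV:
  assumes hC: "\<And>m. 1 - qq ^ m * C \<noteq> 0"
  shows "(\<Sum>k\<le>n. tt B C n k) = (\<Prod>i<n. B - C * qq ^ i) / qpoch C n"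
proof (induction n)
  case 0 thus ?case by simp
next
  case (Suc n)
  have tel: "(\<Sum>k\<le>Suc n. (1 - C * qq ^ n) * tt B C (Suc n) k - (B - C * qq ^ n) * tt B C n k) = 0"
  proof -
    have "(\<Sum>k\<le>Suc n. (1 - C * qq ^ n) * tt B C (Suc n) k - (B - C * qq ^ n) * tt B C n k)
        = (\<Sum>k<Suc (Suc n). Gt B C n (Suc k) - Gt B C n k)"
      by (simp only: CV_term[OF hC] lessThan_Suc_atMost)
    also have "\<dots> = Gt B C n (Suc (Suc n)) - Gt B C n 0" by (rule sum_lessThan_telescope)
    also have "\<dots> = 0" by (simp add: Gt_def tt_vanish)
    finally show ?thesis .
  qed
  have s2: "(\<Sum>k\<le>Suc n. tt B C n k) = (\<Sum>k\<le>n. tt B C n k)" by (simp add: tt_vanish)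
  have "(1 - C * qq ^ n) * (\<Sum>k\<le>Suc n. tt B C (Suc n) k) = (B - C * qq ^ n) * (\<Sum>k\<le>n. tt B C n k)"
  proof -
    have "(\<Sum>k\<le>Suc n. (1 - C * qq ^ n) * tt B C (Suc n) k) = (\<Sum>k\<le>Suc n. (B - C * qq ^ n) * tt B C n k)"
      using tel unfolding sum_subtractf by simp
    thus ?thesis unfolding s2[symmetric] sum_distrib_left[symmetric] .
  qed
  moreover have "1 - C * qq ^ n \<noteq> 0" using hC[of n] by (simp add: mult.commute)
  moreover have "qpoch C n \<noteq> 0" unfolding qpoch_def using hC by (simp add: prod_zero_iff)
  ultimately show ?case unfolding Suc.IH
    by (simp add: qpoch_Suc field_simps mult.commute)
qed



lemma qq_minus_1_ne0 [simp]: "qq - 1 \<noteq> 0" using qq_ne1 by simp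
lemma one_minus_qq_ne0 [simp]: "1 - qq \<noteq> 0" using qq_ne1 by simp

lemma qint_mult: "qint i * (qq - 1) = qq ^ i - 1"
  by (simp add: qint_def)

lemma Desc_Suc: "Desc (Suc n) = Desc n * [:qint (Suc n), -1:]"
  unfolding Desc_def by (intro poly_ext) (simp add: poly_prod atLeastAtMostSuc_conv mult.commute)

lemma Aprod_Y: "pcompose (Aprod k) Y = smult ((1 - qq) ^ k) (Asc k)"
proof (induction k)
  case 0 thus ?case by (simp add: Asc_def pcompose_1)
next
  case (Suc k)
  have e: "pcompose [:1, - (qq ^ (k + 1)):] Y = smult (1 - qq) [:qint (Suc k), qq ^ Suc k:]"
    by (simp add: Y_def pcompose_pCons qint_def field_simps) (simp add: algebra_simps)?
  have A: "Asc (Suc k) = Asc k * [:qint (Suc k), qq ^ Suc k:]"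
    by (simp add: Asc_def)
  show ?case by (simp only: Aprod_Suc pcompose_mult Suc e A) (rule poly_ext, simp add: algebra_simps)
qed

lemma Dprod_Y: "pcompose (Dprod c) Y = smult (- ((qq - 1) ^ c)) (xDesc c)"
proof (induction c)
  case 0 thus ?case by (simp add: xDesc_def pcompose_1)
next
  case (Suc c)
  show ?case
  proof (cases c)
    case 0
    thus ?thesis by (simp add: Dprod_def xDesc_def Desc_def Y_def pcompose_pCons)
  next
    case (Suc c')
    have e: "pcompose [:qq ^ c, -1:] Y = smult (qq - 1) [:qint c, -1:]"
      by (simp add: Y_def pcompose_pCons qint_def field_simps) (simp add: algebra_simps)?
    have D: "Desc c = Desc (c - 1) * [:qint c, -1:]"
      using Suc by (simp only: Desc_Suc diff_Suc_1)
    have X: "xDesc (Suc c) = xDesc c * [:qint c, -1:]"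
    proof -
      have x1: "xDesc (Suc c) = [:0, 1:] * Desc c" by (simp add: xDesc_def)
      have x2: "xDesc c = [:0, 1:] * Desc (c - 1)" using Suc by (simp add: xDesc_def)
      show ?thesis by (simp only: x1 x2 D mult.assoc)
    qed
    show ?thesis
      by (simp only: Dprod_Suc pcompose_mult e X Suc.IH) (rule poly_ext, simp add: algebra_simps)
  qed
qed


definition KK :: "nat \<Rightarrow> nat \<Rightarrow> nat \<Rightarrow> nat \<Rightarrow> Qq" where
  "KK a b c d = (1 - qq) ^ (a + b) * (qq - 1) ^ (c + d)"

lemma KK_ne0: "KK a b c d \<noteq> 0" by (simp add: KK_def)

lemma x2W_Y: "pcompose (wy a b c d) Y = smult (KK a b c d) (x2W (Suc a) (Suc b) c d)"
  by (simp add: wy_def x2W_def pcompose_mult Aprod_Y Dprod_Y KK_def power_add mult_ac)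

lemma x2W_eq: "x2W (Suc a) (Suc b) c d = smult (inverse (KK a b c d)) (pcompose (wy a b c d) Y)"
  using KK_ne0[of a b c d] by (simp add: x2W_Y)

lemma MF_moments: "mom_functional (\<lambda>n. Psi ([:0, 1:] ^ n * W) / Cc) p = Psi (p * W) / Cc"
proof -
  have "p * W = (\<Sum>i\<le>degree p. smult (coeff p i) ([:0, 1:] ^ i * W))"
    by (subst (1) poly_as_sum_of_monoms[symmetric])
       (simp add: monom_altdef sum_distrib_right)
  hence "Psi (p * W) / Cc = (\<Sum>i\<le>degree p. coeff p i * (Psi ([:0, 1:] ^ i * W) / Cc))"
    by (simp add: Psi_sum Psi_smult sum_divide_distrib)
  thus ?thesis by (simp add: mom_functional_def)
qed

lemma moments_Y:
  "mom_functional (\<lambda>n. Psi ([:0, 1:] ^ n * x2W (Suc a) (Suc b) c d) / Psi (x2W (Suc a) (Suc b) c d)) (pcompose py Y)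
   = Psiy (py * wy a b c d) / Gy a b c d"
proof -
  have "Psi (pcompose py Y * x2W (Suc a) (Suc b) c d) = inverse (KK a b c d) * Psiy (py * wy a b c d)"
  proof -
    have "pcompose py Y * pcompose (wy a b c d) Y = pcompose (py * wy a b c d) Y" by (simp add: pcompose_mult)
    thus ?thesis by (simp add: x2W_eq Psi_smult Psi_pcompose_Y)
  qed
  moreover have "Psi (x2W (Suc a) (Suc b) c d) = inverse (KK a b c d) * Gy a b c d"
    by (simp add: x2W_eq Psi_smult Psi_pcompose_Y Gy_def)
  ultimately show ?thesis using KK_ne0[of a b c d] by (simp add: MF_moments)
qed

definition Aq :: "nat \<Rightarrow> nat \<Rightarrow> Qq poly" where "Aq s k = (\<Prod>j<k. [:1, - (qq ^ (s + 1 + j)):])"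

lemma Aq_Suc: "Aq s (Suc k) = Aq s k * [:1, - (qq ^ (s + 1 + k)):]" by (simp add: Aq_def)

lemma Aprod_Aq: "Aprod a * Aq a k = Aprod (a + k)"
proof (induction k)
  case 0 thus ?case by (simp add: Aq_def)
next
  case (Suc k)
  have "Aprod a * Aq a (Suc k) = (Aprod a * Aq a k) * [:1, - (qq ^ (a + k + 1)):]"
    by (simp only: Aq_Suc mult.assoc) (simp add: add_ac)
  also have "\<dots> = Aprod (a + Suc k)" by (simp only: Suc Aprod_Suc add_Suc_right)
  finally show ?case .
qed

lemma qpoch_poly_Y: "qpoch_poly [:qq ^ Suc a, qq ^ Suc a * (qq - 1):] k = pcompose (Aq a k) Y"
proof -
  have "\<And>j. 1 - smult (qq ^ j) [:qq ^ Suc a, qq ^ Suc a * (qq - 1):] = pcompose [:1, - (qq ^ (a + 1 + j)):] Y"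
    by (simp add: Y_def pcompose_pCons power_add algebra_simps)
  thus ?thesis by (simp add: qpoch_poly_def Aq_def pcompose_prod)
qed

definition cf :: "nat \<Rightarrow> nat \<Rightarrow> nat \<Rightarrow> nat \<Rightarrow> nat \<Rightarrow> nat \<Rightarrow> Qq" where
  "cf a b c d n k = qpoch (inverse qq ^ n) k * qpoch (qq ^ (n + a + b + c + d + 1)) k * qq ^ k
      / (qpoch qq k * qpoch (qq ^ (a + c + 1)) k * qpoch (qq ^ (a + d + 1)) k)"

definition Py :: "nat \<Rightarrow> nat \<Rightarrow> nat \<Rightarrow> nat \<Rightarrow> nat \<Rightarrow> Qq poly" where
  "Py a b c d n = (\<Sum>k\<le>n. smult (cf a b c d n k) (Aq a k))"

lemma Pn_Y: "Pn (Suc a) (Suc b) c d n = pcompose (Py a b c d n) Y"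
proof -
  have "n + Suc a + Suc b + c + d - 1 = n + a + b + c + d + 1" "Suc a + c = a + c + 1" "Suc a + d = a + d + 1" by simp_all
  thus ?thesis unfolding Pn_def Py_def cf_def qpoch_poly_Y by (simp add: pcompose_sum pcompose_smult)
qed



lemma Pi_add: "Pi (m + k) = Pi m * qpoch (qq ^ (m + 1)) k"
proof (induction k)
  case 0 thus ?case by simp
next
  case (Suc k)
  have "qq ^ k * qq ^ (m + 1) = qq ^ (m + k + 1)" by (simp add: power_add[symmetric] add_ac)
  thus ?case by (simp add: Suc Pi_Suc qpoch_Suc)
qed

lemma qpoch_qqpow_ne0: "qpoch (qq ^ (Suc m)) k \<noteq> 0"
proof -
  have "Pi (m + k) = Pi m * qpoch (qq ^ (m + 1)) k" by (rule Pi_add)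
  thus ?thesis using Pi_ne0[of "m + k"] by auto
qed

lemma Gf_ne0: "Gf a b c d \<noteq> 0"
  by (simp add: Gf_def Pi_ne0)

lemma wy_Aq: "wy a b c d * (Aq a k * Aq b j) = wy (a + k) (b + j) c d"
proof -
  have "wy a b c d * (Aq a k * Aq b j) = (Aprod a * Aq a k) * (Aprod b * Aq b j) * Dprod c * Dprod d"
    by (simp add: wy_def mult_ac)
  thus ?thesis by (simp add: Aprod_Aq wy_def)
qed

definition Ly :: "nat \<Rightarrow> nat \<Rightarrow> nat \<Rightarrow> nat \<Rightarrow> Qq poly \<Rightarrow> Qq" where
  "Ly a b c d f = Psiy (f * wy a b c d) / Gy a b c d"

lemma Ly_add: "Ly a b c d (f + g) = Ly a b c d f + Ly a b c d g"
  by (simp add: Ly_def distrib_right MF_add add_divide_distrib)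

lemma Ly_smult: "Ly a b c d (smult r f) = r * Ly a b c d f"
  by (simp add: Ly_def MF_smult)

lemma Ly_diff: "Ly a b c d (f - g) = Ly a b c d f - Ly a b c d g"
  by (simp add: Ly_def left_diff_distrib MF_diff diff_divide_distrib)

lemma Ly_Py_Aq:
  "Ly a b c d (Py a b c d n * Aq b j) = (\<Sum>k\<le>n. cf a b c d n k * Gf (a + k) (b + j) c d) / Gf a b c d"
proof -
  have "Py a b c d n * Aq b j * wy a b c d = (\<Sum>k\<le>n. smult (cf a b c d n k) (wy (a + k) (b + j) c d))"
    unfolding Py_def sum_distrib_right
  proof (rule sum.cong)
    fix k assume "k \<in> {..n}"
    have "smult (cf a b c d n k) (Aq a k) * Aq b j * wy a b c d = smult (cf a b c d n k) (wy a b c d * (Aq a k * Aq b j))"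
      by (simp add: mult_ac)
    thus "smult (cf a b c d n k) (Aq a k) * Aq b j * wy a b c d = smult (cf a b c d n k) (wy (a + k) (b + j) c d)"
      by (simp only: wy_Aq)
  qed simp
  thus ?thesis by (simp add: Ly_def MF_sum MF_smult Gy_def[symmetric] Gy_closed)
qed

definition Zj :: "nat \<Rightarrow> nat \<Rightarrow> nat \<Rightarrow> nat \<Rightarrow> nat \<Rightarrow> Qq" where
  "Zj a b c d j = (-1) ^ (c + d) * (1 - qq) * qq ^ (c * d) * Pi (a + c) * Pi (a + d) * Pi (b + c + j) * Pi (b + d + j)
      / Pi (a + b + c + d + j + 1)"

lemma cf_Gf:
  "cf a b c d n k * Gf (a + k) (b + j) c d
   = Zj a b c d j * tt (qq ^ (n + a + b + c + d + 1)) (qq ^ (a + b + c + d + j + 2)) n k"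
proof -
  have e1: "Pi (a + k + c) = Pi (a + c) * qpoch (qq ^ (a + c + 1)) k"
    using Pi_add[of "a + c" k] by (simp add: add_ac)
  have e2: "Pi (a + k + d) = Pi (a + d) * qpoch (qq ^ (a + d + 1)) k"
    using Pi_add[of "a + d" k] by (simp add: add_ac)
  have e3: "Pi (a + k + (b + j) + c + d + 1) = Pi (a + b + c + d + j + 1) * qpoch (qq ^ (a + b + c + d + j + 2)) k"
    using Pi_add[of "a + b + c + d + j + 1" k] by (simp add: add_ac)
  have n1: "qpoch (qq ^ (a + c + 1)) k \<noteq> 0" using qpoch_qqpow_ne0[of "a + c" k] by simp
  have n2: "qpoch (qq ^ (a + d + 1)) k \<noteq> 0" using qpoch_qqpow_ne0[of "a + d" k] by simp
  have n3: "qpoch (qq ^ (a + b + c + d + j + 2)) k \<noteq> 0" using qpoch_qqpow_ne0[of "a + b + c + d + j + 1" k] by simp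
  show ?thesis
    unfolding Gf_def e1 e2 e3 cf_def tt_def Zj_def
    using n1 n2 n3 qpoch_qq_ne0[of k] Pi_ne0
    by (simp add: field_simps add_ac)
qed


lemma Ly_Py_Aq_val:
  "Ly a b c d (Py a b c d n * Aq b j) = Zj a b c d j *
     ((\<Prod>i<n. qq ^ (n + a + b + c + d + 1) - qq ^ (a + b + c + d + j + 2) * qq ^ i) / qpoch (qq ^ (a + b + c + d + j + 2)) n)
     / Gf a b c d"
proof -
  have hC: "1 - qq ^ m * qq ^ (a + b + c + d + j + 2) \<noteq> 0" for m
  proof -
    have "1 - qq ^ (m + (a + b + c + d + j + 2)) \<noteq> 0" by (rule one_minus_qq_pow_ne0) simp
    thus ?thesis by (metis power_add)
  qed
  show ?thesis unfolding Ly_Py_Aq cf_Gf sum_distrib_left[symmetric] qCV[OF hC] ..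
qed

lemma Zj_ne0: "Zj a b c d j \<noteq> 0" by (simp add: Zj_def Pi_ne0)

lemma ortho_zero: "j < n \<Longrightarrow> Ly a b c d (Py a b c d n * Aq b j) = 0"
proof -
  assume jn: "j < n"
  define i where "i = n - 1 - j"
  have "i < n" using jn by (simp add: i_def)
  moreover have "qq ^ (n + a + b + c + d + 1) - qq ^ (a + b + c + d + j + 2) * qq ^ i = 0"
  proof -
    have e: "a + b + c + d + j + 2 + i = n + a + b + c + d + 1" using jn by (simp add: i_def)
    have "qq ^ (a + b + c + d + j + 2) * qq ^ i = qq ^ (n + a + b + c + d + 1)"
      by (simp only: power_add[symmetric] e)
    thus ?thesis by simp
  qed
  ultimately have "(\<Prod>i<n. qq ^ (n + a + b + c + d + 1) - qq ^ (a + b + c + d + j + 2) * qq ^ i) = 0"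
    by (auto intro: prod_zero)
  thus ?thesis unfolding Ly_Py_Aq_val by simp
qed

lemma ortho_nz: "Ly a b c d (Py a b c d n * Aq b n) \<noteq> 0"
proof -
  have "(\<Prod>i<n. qq ^ (n + a + b + c + d + 1) - qq ^ (a + b + c + d + n + 2) * qq ^ i) \<noteq> 0"
  proof -
    have "qq ^ (n + a + b + c + d + 1) - qq ^ (a + b + c + d + n + 2) * qq ^ i \<noteq> 0" for i
    proof -
      have "qq ^ (a + b + c + d + n + 2) * qq ^ i = qq ^ (a + b + c + d + n + 2 + i)" by (simp only: power_add)
      moreover have "qq ^ (n + a + b + c + d + 1) \<noteq> qq ^ (a + b + c + d + n + 2 + i)"
        by (simp only: qq_pow_eq_iff)
      ultimately show ?thesis by simp
    qed
    thus ?thesis by (simp only: prod_zero_iff[OF finite_lessThan]) blast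
  qed
  moreover have "qpoch (qq ^ (a + b + c + d + n + 2)) n \<noteq> 0"
    using qpoch_qqpow_ne0[of "a + b + c + d + n + 1" n] by simp
  ultimately show ?thesis unfolding Ly_Py_Aq_val using Zj_ne0 Gf_ne0 by simp
qed



lemma Aq_lin_ne0: "[:1, - (qq ^ (s + 1 + j)):] \<noteq> 0" by simp

lemma degree_Aq: "degree (Aq s k) = k"
  unfolding Aq_def by (subst degree_prod_sum_eq) auto

lemma lead_Aq: "coeff (Aq s k) k \<noteq> 0"
proof -
  have "lead_coeff (Aq s k) = (\<Prod>j<k. - (qq ^ (s + 1 + j)))"
    unfolding Aq_def lead_coeff_prod by simp
  hence "coeff (Aq s k) k = (\<Prod>j<k. - (qq ^ (s + 1 + j)))" using degree_Aq[of s k] by simp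
  thus ?thesis by simp
qed

lemma Aq_0 [simp]: "Aq s 0 = 1" by (simp add: Aq_def)

lemma qpoch_inv_ne0: "qpoch (inverse qq ^ n) n \<noteq> 0"
proof -
  have "1 - qq ^ j * inverse qq ^ n \<noteq> 0" if "j < n" for j
  proof -
    have "qq ^ j * inverse qq ^ n = inverse (qq ^ (n - j))"
      using that by (simp add: power_inverse field_simps flip: power_add)
    moreover have "qq ^ (n - j) \<noteq> 1" using that qq_pow_ne1[of "n - j"] by simp
    ultimately show ?thesis by (simp add: inverse_eq_divide field_simps)
  qed
  thus ?thesis unfolding qpoch_def by (simp add: prod_zero_iff)
qed

lemma cf_nn_ne0: "cf a b c d n n \<noteq> 0"
proof -
  have "qpoch (qq ^ (n + a + b + c + d + 1)) n \<noteq> 0" using qpoch_qqpow_ne0[of "n + a + b + c + d" n] by simp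
  moreover have "qpoch (qq ^ (a + c + 1)) n \<noteq> 0" using qpoch_qqpow_ne0[of "a + c" n] by simp
  moreover have "qpoch (qq ^ (a + d + 1)) n \<noteq> 0" using qpoch_qqpow_ne0[of "a + d" n] by simp
  ultimately show ?thesis using qpoch_inv_ne0[of n] qpoch_qq_ne0[of n] by (simp add: cf_def)
qed

lemma degree_Py_le: "degree (Py a b c d n) \<le> n"
  unfolding Py_def by (rule degree_sum_le) (auto simp: degree_Aq intro: order.trans[OF degree_smult_le])

lemma coeff_Py_n: "coeff (Py a b c d n) n = cf a b c d n n * coeff (Aq a n) n"
proof -
  have "coeff (Py a b c d n) n = (\<Sum>k\<le>n. cf a b c d n k * coeff (Aq a k) n)"
    by (simp add: Py_def coeff_sum)
  also have "\<dots> = (\<Sum>k\<in>{n}. cf a b c d n k * coeff (Aq a k) n)"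
    by (rule sum.mono_neutral_right) (auto simp: coeff_eq_0 degree_Aq)
  finally show ?thesis by simp
qed

lemma coeff_Py_ne0: "coeff (Py a b c d n) n \<noteq> 0"
  using cf_nn_ne0 lead_Aq by (simp add: coeff_Py_n)

lemma degree_Py: "degree (Py a b c d n) = n"
  using degree_Py_le coeff_Py_ne0 by (metis le_antisym le_degree)

lemma Py_ne0: "Py a b c d n \<noteq> 0"
  using coeff_Py_ne0[of a b c d n] by (metis coeff_0)

lemma Ly_vanish: "degree f \<le> m \<Longrightarrow> m < n \<Longrightarrow> Ly a b c d (Py a b c d n * f) = 0"
proof (induction m arbitrary: f)
  case 0
  hence "f = smult (coeff f 0) (Aq b 0)" by (auto elim!: degree_eq_zeroE)
  hence "Py a b c d n * f = smult (coeff f 0) (Py a b c d n * Aq b 0)" by (metis mult_smult_right)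
  thus ?case using ortho_zero[of 0 n] 0 by (simp add: Ly_smult)
next
  case (Suc m)
  define r where "r = coeff f (Suc m) / coeff (Aq b (Suc m)) (Suc m)"
  define g where "g = f - smult r (Aq b (Suc m))"
  have "degree g \<le> m"
  proof (rule degree_le, intro allI impI)
    fix i assume "m < i"
    show "coeff g i = 0"
    proof (cases "i = Suc m")
      case True thus ?thesis using lead_Aq[of b "Suc m"] by (simp add: g_def r_def)
    next
      case False
      hence "i > Suc m" using \<open>m < i\<close> by simp
      hence "coeff f i = 0" "coeff (Aq b (Suc m)) i = 0"
        using Suc.prems(1) by (auto simp: coeff_eq_0 degree_Aq)
      thus ?thesis by (simp add: g_def)
    qed
  qed
  hence "Ly a b c d (Py a b c d n * g) = 0" using Suc.IH Suc.prems by simp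
  moreover have "Py a b c d n * f = Py a b c d n * g + smult r (Py a b c d n * Aq b (Suc m))"
    by (simp add: g_def algebra_simps)
  ultimately show ?case using ortho_zero[of "Suc m" n] Suc.prems by (simp add: Ly_add Ly_smult)
qed

lemma Ly_ortho: "i \<noteq> j \<Longrightarrow> Ly a b c d (Py a b c d i * Py a b c d j) = 0"
proof -
  assume "i \<noteq> j"
  hence "j < i \<or> i < j" by auto
  thus ?thesis
  proof
    assume "j < i" thus ?thesis using Ly_vanish[of "Py a b c d j" j i] by (simp add: degree_Py)
  next
    assume "i < j"
    hence "Ly a b c d (Py a b c d j * Py a b c d i) = 0" using Ly_vanish[of "Py a b c d i" i j a b c d] by (simp add: degree_Py)
    thus ?thesis by (simp add: mult.commute)
  qed
qed

lemma Ly_norm: "Ly a b c d (Py a b c d n * Py a b c d n) \<noteq> 0"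
proof -
  define r where "r = coeff (Py a b c d n) n / coeff (Aq b n) n"
  define g where "g = Py a b c d n - smult r (Aq b n)"
  have r0: "r \<noteq> 0" using coeff_Py_ne0 lead_Aq by (simp add: r_def)
  have cg: "coeff g i = 0" if "i \<ge> n" for i
  proof (cases "i = n")
    case True thus ?thesis using lead_Aq[of b n] by (simp add: g_def r_def)
  next
    case False
    hence "i > n" using that by simp
    thus ?thesis by (simp add: g_def coeff_eq_0 degree_Aq degree_Py)
  qed
  have "Ly a b c d (Py a b c d n * g) = 0"
  proof (cases n)
    case 0
    hence "g = 0" using cg by (intro poly_eqI) simp
    thus ?thesis by (simp add: Ly_def)
  next
    case (Suc m)
    have "degree g \<le> m" using cg Suc by (intro degree_le) auto
    thus ?thesis using Ly_vanish[of g m n] Suc by simp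
  qed
  moreover have "Py a b c d n * Py a b c d n = Py a b c d n * g + smult r (Py a b c d n * Aq b n)"
    by (simp add: g_def algebra_simps)
  ultimately show ?thesis using ortho_nz[of a b c d n] r0 by (simp add: Ly_add Ly_smult)
qed



theorem mainTheorem12:
  fixes a b c d :: nat
  assumes "a \<ge> 1" and "b \<ge> 1"
  shows "is_moments_of
           (\<lambda>n. Psi ([:0, 1:] ^ n * x2W a b c d) / Psi (x2W a b c d))
           (Pn a b c d)"
proof -
  obtain a' b' where a: "a = Suc a'" and b: "b = Suc b'"
    using assms by (metis Suc_pred' less_eq_Suc_le One_nat_def)
  define m where "m = (\<lambda>n. Psi ([:0, 1:] ^ n * x2W a b c d) / Psi (x2W a b c d))"
  have PsiW: "Psi (x2W a b c d) = inverse (KK a' b' c d) * Gy a' b' c d"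
    unfolding a b by (simp add: x2W_eq Psi_smult Psi_pcompose_Y Gy_def)
  have PsiW0: "Psi (x2W a b c d) \<noteq> 0"
    unfolding PsiW using KK_ne0 Gf_ne0 by (simp add: Gy_closed)
  have MF: "mom_functional m (Pn a b c d i * Pn a b c d j) = Ly a' b' c d (Py a' b' c d i * Py a' b' c d j)" for i j
    unfolding m_def a b Pn_Y pcompose_mult[symmetric] moments_Y Ly_def ..
  have degY: "degree Y = 1" by (simp add: Y_def)
  show ?thesis
    unfolding is_moments_of_def m_def[symmetric]
  proof (intro conjI allI impI)
    show "m 0 = 1" using PsiW0 by (simp add: m_def)
  next
    fix n
    show "degree (Pn a b c d n) = n"
      unfolding a b Pn_Y by (simp add: degree_pcompose degY degree_Py)
    show "Pn a b c d n \<noteq> 0"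
      unfolding a b Pn_Y using Py_ne0 degY by (simp add: pcompose_eq_0_iff)
    show "mom_functional m (Pn a b c d n * Pn a b c d n) \<noteq> 0"
      unfolding MF by (rule Ly_norm)
  next
    fix i j :: nat assume "i \<noteq> j"
    thus "mom_functional m (Pn a b c d i * Pn a b c d j) = 0"
      unfolding MF by (rule Ly_ortho)
  qed
qed


end
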